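(* Let $F$ be a distribution on the nonnegative integers $\mathbf Z^+$ with unbounded support. Then $F\in\mathcal S_{\text{lattice}}(\hat\gamma)$ if and only if: (i) $\liminf_{x\to\infty}F\{x-1\}/F\{x\}\ge e^{\hat\gamma}$ (over integers $x$); and (ii) $F*F\{n\}\sim c\,F\{n\}$ as $n\to\infty$ for some $c\in(0,\infty)$.
   Context: $F\{n\}$ denotes the mass of $F$ at the point $n$. $\varphi(\gamma)=\sum_{n\ge0}e^{\gamma n}F\{n\}\in(0,\infty]$ and $\hat\gamma=\sup\{\gamma:\varphi(\gamma)<\infty\}$. For $\gamma\ge0$, a distribution $F$ on $\mathbf Z^+$ with unbounded support belongs to $\mathcal S_{\text{lattice}}(\gamma)$ if (i) $\varphi(\gamma)<\infty$; (ii) $F\{n+1\}/F\{n\}\to e^{-\gamma}$ as $n\to\infty$; (iii) $F*F\{n\}\sim 2\varphi(\gamma)F\{n\}$ as $n\to\infty$. *)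

theory Defs
  imports "HOL-Probability.Probability_Mass_Function" "HOL-Library.Landau_Symbols"
begin

text \<open>A distribution F on the nonnegative integers is a nat pmf; F{n} = pmf F n.\<close>

definition phi_finite :: "nat pmf \<Rightarrow> real \<Rightarrow> bool" where
  "phi_finite F \<gamma> \<longleftrightarrow> summable (\<lambda>n. exp (\<gamma> * real n) * pmf F n)"

definition phi :: "nat pmf \<Rightarrow> real \<Rightarrow> real" where
  "phi F \<gamma> = (\<Sum>n. exp (\<gamma> * real n) * pmf F n)"

definition gamma_hat :: "nat pmf \<Rightarrow> ereal" where
  "gamma_hat F = Sup {ereal \<gamma> | \<gamma>. phi_finite F \<gamma>}"

definition conv2 :: "nat pmf \<Rightarrow> nat \<Rightarrow> real" where
  "conv2 F n = (\<Sum>k\<le>n. pmf F k * pmf F (n - k))"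

definition S_lattice :: "nat pmf \<Rightarrow> real \<Rightarrow> bool" where
  "S_lattice F \<gamma> \<longleftrightarrow> \<gamma> \<ge> 0 \<and> infinite (set_pmf F) \<and> phi_finite F \<gamma> \<and>
     ((\<lambda>n. pmf F (Suc n) / pmf F n) \<longlonglongrightarrow> exp (- \<gamma>)) \<and>
     (conv2 F \<sim>[sequentially] (\<lambda>n. 2 * phi F \<gamma> * pmf F n))"

end

theory Submission
  imports Defs
begin


definition cv :: "(nat \<Rightarrow> real) \<Rightarrow> nat \<Rightarrow> real" where
  "cv b n = (\<Sum>k\<le>n. b k * b (n - k))"

lemma cv_lower:
  assumes nn: "\<And>k. 0 \<le> b k" and nK: "2 * K < n"
  shows "2 * (\<Sum>k\<le>K. b k * b (n - k)) \<le> cv b n"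
proof -
  let ?f = "\<lambda>k. b k * b (n - k)"
  have fn: "\<And>k. 0 \<le> ?f k" using nn by (simp)
  have inj: "inj_on (\<lambda>k. n - k) {..K}" using nK by (intro inj_onI) auto
  have eq: "\<forall>x\<in>{..K}. ?f (n - x) = ?f x"
  proof
    fix x assume "x \<in> {..K}"
    then have "n - (n - x) = x" using nK by auto
    then show "?f (n - x) = ?f x" by (simp add: mult.commute)
  qed
  have img: "(\<Sum>k\<in>(\<lambda>k. n - k) ` {..K}. ?f k) = (\<Sum>k\<le>K. ?f k)"
  proof -
    have "(\<Sum>k\<in>(\<lambda>k. n - k) ` {..K}. ?f k) = (\<Sum>k\<le>K. ?f (n - k))"
      by (rule sum.reindex[OF inj, unfolded comp_def])
    also have "\<dots> = (\<Sum>k\<le>K. ?f k)" by (rule sum.cong[OF refl]) (use eq in blast)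
    finally show ?thesis .
  qed
  have disj: "{..K} \<inter> (\<lambda>k. n - k) ` {..K} = {}" using nK by auto
  have sub: "{..K} \<union> (\<lambda>k. n - k) ` {..K} \<subseteq> {..n}" using nK by auto
  have "2 * (\<Sum>k\<le>K. ?f k) = (\<Sum>k\<in>{..K} \<union> (\<lambda>k. n - k) ` {..K}. ?f k)"
    by (subst sum.union_disjoint) (use disj img in auto)
  also have "\<dots> \<le> (\<Sum>k\<le>n. ?f k)"
    by (rule sum_mono2[OF _ sub]) (use fn in auto)
  finally show ?thesis by (simp add: cv_def)
qed

lemma chain_bound:
  fixes b :: "nat \<Rightarrow> real"
  assumes nn: "\<And>k. 0 \<le> b k" and e: "0 < e" "e < 1"
    and step: "\<And>j. Mz \<le> j \<Longrightarrow> (1 - e) * b j \<le> b (j - 1)"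
    and nN: "Mz + K < n" and L: "0 \<le> L" "L * b n \<le> b (n - 1)"
    and k: "1 \<le> k" "k \<le> K"
  shows "L * (1 - e) ^ K * b n \<le> b (n - k)"
proof -
  have ind: "i < K \<Longrightarrow> (1 - e) ^ i * b (n - 1) \<le> b (n - 1 - i)" for i
  proof (induction i)
    case 0 then show ?case by simp
  next
    case (Suc i)
    have "(1 - e) ^ Suc i * b (n - 1) = (1 - e) * ((1 - e) ^ i * b (n - 1))" by simp
    also have "\<dots> \<le> (1 - e) * b (n - 1 - i)"
      using Suc e by (intro mult_left_mono) auto
    also have "\<dots> \<le> b (n - 1 - i - 1)"
    proof -
      have "Mz \<le> n - 1 - i" using Suc.prems nN by linarith
      then show ?thesis by (rule step)
    qed
    also have "n - 1 - i - 1 = n - 1 - Suc i" by simp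
    finally show ?case .
  qed
  have "(1 - e) ^ (k - 1) * b (n - 1) \<le> b (n - k)"
    using ind[of "k - 1"] k by (simp add: diff_diff_add)
  moreover have "L * (1 - e) ^ K * b n \<le> (1 - e) ^ (k - 1) * (L * b n)"
  proof -
    have "(1 - e) ^ K \<le> (1 - e) ^ (k - 1)"
      using e k by (intro power_decreasing) auto
    then have "b n * (1 - e) ^ K \<le> b n * (1 - e) ^ (k - 1)"
      using nn[of n] by (intro mult_left_mono) auto
    then have "L * (b n * (1 - e) ^ K) \<le> L * (b n * (1 - e) ^ (k - 1))"
      by (rule mult_left_mono) (use L in auto)
    then show ?thesis by (simp add: mult.commute mult.left_commute)
  qed
  moreover have "(1 - e) ^ (k - 1) * (L * b n) \<le> (1 - e) ^ (k - 1) * b (n - 1)"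
    using L e by (intro mult_left_mono) auto
  ultimately show ?thesis by linarith
qed

lemma freq_bound:
  fixes b :: "nat \<Rightarrow> real"
  assumes nn: "\<And>k. 0 \<le> b k" and q: "(\<lambda>n. cv b n / b n) \<longlonglongrightarrow> c"
    and pos: "eventually (\<lambda>n. 0 < b n) sequentially"
    and e: "0 < e" "e < 1" and st: "eventually (\<lambda>j. (1 - e) * b j \<le> b (j - 1)) sequentially"
    and fr: "frequently (\<lambda>n. L * b n \<le> b (n - 1)) sequentially" and L: "0 \<le> L"
  shows "2 * (b 0 + L * (1 - e) ^ K * (\<Sum>k\<in>{1..K}. b k)) \<le> c"
proof -
  define B where "B = 2 * (b 0 + L * (1 - e) ^ K * (\<Sum>k\<in>{1..K}. b k))"
  from eventually_conj[OF st pos] obtain N0 where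
    N0: "\<And>j. N0 \<le> j \<Longrightarrow> (1 - e) * b j \<le> b (j - 1) \<and> 0 < b j"
    unfolding eventually_sequentially by blast
  have key: "B \<le> cv b n / b n" if n: "N0 + 2 * K < n" and Ln: "L * b n \<le> b (n - 1)" for n
  proof -
    have bn: "0 < b n" using N0[of n] n by auto
    have eqs: "(\<Sum>k\<le>K. b k * b (n - k)) = b 0 * b n + (\<Sum>k\<in>{1..K}. b k * b (n - k))"
      by (simp add: atMost_atLeast0 sum.atLeast_Suc_atMost)
    have ges: "(\<Sum>k\<in>{1..K}. b k * b (n - k)) \<ge> (\<Sum>k\<in>{1..K}. b k * (L * (1 - e) ^ K * b n))"
    proof (rule sum_mono)
      fix k assume k: "k \<in> {1..K}"
      have "L * (1 - e) ^ K * b n \<le> b (n - k)"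
        by (rule chain_bound[where Mz=N0 and K=K and n=n and L=L and k=k, OF nn e]) (use N0 n Ln L k in auto)
      then show "b k * (L * (1 - e) ^ K * b n) \<le> b k * b (n - k)"
        by (rule mult_left_mono) (rule nn)
    qed
    have "b 0 * b n + (\<Sum>k\<in>{1..K}. b k * (L * (1 - e) ^ K * b n)) \<le> (\<Sum>k\<le>K. b k * b (n - k))"
      using eqs ges by linarith
    moreover have "2 * (\<Sum>k\<le>K. b k * b (n - k)) \<le> cv b n"
      by (rule cv_lower[OF nn]) (use n in auto)
    moreover have "B * b n = 2 * (b 0 * b n + (\<Sum>k\<in>{1..K}. b k * (L * (1 - e) ^ K * b n)))"
      unfolding B_def by (simp add: sum_distrib_left sum_distrib_right algebra_simps)
    ultimately have "B * b n \<le> cv b n" by (smt (verit))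
    then show ?thesis using bn by (simp add: pos_le_divide_eq)
  qed
  show ?thesis
  proof (rule ccontr)
    assume "\<not> ?thesis"
    then have "c < B" unfolding B_def by simp
    from order_tendstoD(2)[OF q this] obtain M where M: "\<And>n. M \<le> n \<Longrightarrow> cv b n / b n < B"
      unfolding eventually_sequentially by blast
    from fr obtain n where n: "n \<ge> max M (Suc (N0 + 2 * K))" "L * b n \<le> b (n - 1)"
      unfolding frequently_def eventually_sequentially by (meson not_le_imp_less order.strict_implies_order) 
    show False using key[of n] M[of n] n by auto
  qed
qed

lemma lim_bound:
  fixes b :: "nat \<Rightarrow> real"
  assumes nn: "\<And>k. 0 \<le> b k" and q: "(\<lambda>n. cv b n / b n) \<longlonglongrightarrow> c"
    and pos: "eventually (\<lambda>n. 0 < b n) sequentially"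
    and st: "\<And>e. 0 < e \<Longrightarrow> e < 1 \<Longrightarrow> eventually (\<lambda>j. (1 - e) * b j \<le> b (j - 1)) sequentially"
    and fr: "\<And>e. 0 < e \<Longrightarrow> e < 1 \<Longrightarrow> frequently (\<lambda>n. L * (1 - e) * b n \<le> b (n - 1)) sequentially"
    and L: "0 \<le> L"
  shows "2 * (b 0 + L * (\<Sum>k\<in>{1..K}. b k)) \<le> c"
proof -
  let ?S = "\<Sum>k\<in>{1..K}. b k"
  have ev: "eventually (\<lambda>e. 2 * (b 0 + (L * (1 - e)) * (1 - e) ^ K * ?S) \<le> c) (at_right (0::real))"
    unfolding eventually_at_right_field
  proof (intro exI[of _ 1] conjI allI impI)
    fix e :: real assume "0 < e" "e < 1"
    then show "2 * (b 0 + (L * (1 - e)) * (1 - e) ^ K * ?S) \<le> c"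
      by (intro freq_bound[OF nn q pos]) (use st fr L in auto)
  qed simp
  have lim: "((\<lambda>e. 2 * (b 0 + (L * (1 - e)) * (1 - e) ^ K * ?S)) \<longlongrightarrow> 2 * (b 0 + (L * (1 - 0)) * (1 - 0) ^ K * ?S)) (at_right (0::real))"
    by (intro tendsto_intros)
  have "2 * (b 0 + (L * (1 - 0)) * (1 - 0) ^ K * ?S) \<le> c"
    by (rule tendsto_le[OF trivial_limit_at_right_real tendsto_const lim ev])
  then show ?thesis by simp
qed

lemma sum_union_le_nonneg:
  fixes f :: "'a \<Rightarrow> real"
  assumes "finite A" "finite B" "\<And>x. 0 \<le> f x"
  shows "sum f (A \<union> B) \<le> sum f A + sum f B"
proof -
  have "sum f (A \<union> B) + sum f (A \<inter> B) = sum f A + sum f B"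
    by (rule sum.union_inter) (use assms in auto)
  moreover have "0 \<le> sum f (A \<inter> B)" by (rule sum_nonneg) (use assms in auto)
  ultimately show ?thesis by linarith
qed

lemma sum_prod_rect:
  fixes f g :: "nat \<Rightarrow> real"
  shows "(\<Sum>(i,j)\<in>{..A} \<times> {..B}. f i * g j) = (\<Sum>i\<le>A. f i) * (\<Sum>j\<le>B. g j)"
  by (simp add: sum_product sum.cartesian_product)

lemma FK:
  fixes b :: "nat \<Rightarrow> real"
  assumes nn: "\<And>k. 0 \<le> b k" and sb: "summable b"
    and heavy: "\<And>g. 0 < g \<Longrightarrow> \<not> summable (\<lambda>n. b n * exp (g * real n))"
    and d: "0 < d" and big: "\<And>n. N \<le> n \<Longrightarrow> (2 * suminf b + d) * b n \<le> cv b n"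
  shows False
proof -
  define m where "m = suminf b"
  have m0: "0 \<le> m" unfolding m_def by (rule suminf_nonneg[OF sb nn])
  define V where "V g y = (\<Sum>i\<le>y. b i * (exp (g * real i) - 1))" for g y
  define \<eta> where "\<eta> = d^2 / (8 * (2 * m + d))"
  have pm: "0 < 2 * m + d" using m0 d by linarith
  have eta_pos: "0 < \<eta>" unfolding \<eta>_def using d pm by simp
  have eta_le: "\<eta> \<le> d / 4" unfolding \<eta>_def using d pm m0
    by (simp add: field_simps power2_eq_square)
  have eta_eq: "(2 * m + d) * \<eta> = d^2 / 8" unfolding \<eta>_def using pm by (simp add: field_simps)
  have "((\<lambda>g. V g N) \<longlongrightarrow> V 0 N) (at_right (0::real))"
    unfolding V_def by (intro tendsto_intros)
  moreover have "V 0 N = 0" unfolding V_def by simp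
  ultimately have "eventually (\<lambda>g. V g N < \<eta>) (at_right (0::real))"
    using order_tendstoD(2) eta_pos by metis
  then obtain bd where bd: "bd > 0" "\<And>y. y > 0 \<Longrightarrow> y < bd \<Longrightarrow> V y N < \<eta>"
    unfolding eventually_at_right_field by auto
  define g where "g = bd / 2"
  have g: "0 < g" "V g N < \<eta>" using bd unfolding g_def by auto
  define v where "v i = b i * (exp (g * real i) - 1)" for i
  have vnn: "0 \<le> v i" for i unfolding v_def using nn[of i] g(1)
    by (intro mult_nonneg_nonneg) auto
  have Vv: "V g y = (\<Sum>i\<le>y. v i)" for y unfolding V_def v_def by simp
  have Vmono: "V g y \<le> V g y'" if "y \<le> y'" for y y'
    unfolding Vv by (rule sum_mono2) (use that vnn in auto)
  have Vnn: "0 \<le> V g y" for y unfolding Vv by (rule sum_nonneg) (use vnn in auto)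
  have ex: "\<exists>y. d / 4 < V g y"
  proof (rule ccontr)
    assume "\<not> ?thesis"
    then have bnd: "V g y \<le> d / 4" for y using not_less by blast
    have "summable v"
    proof (rule summableI_nonneg_bounded[OF vnn])
      fix n
      have "(\<Sum>i<n. v i) \<le> (\<Sum>i\<le>n. v i)" by (rule sum_mono2) (use vnn in auto)
      then show "(\<Sum>i<n. v i) \<le> d / 4" using bnd[of n] unfolding Vv by linarith
    qed
    then have "summable (\<lambda>i. v i + b i)" using sb by (rule summable_add)
    moreover have "(\<lambda>i. v i + b i) = (\<lambda>n. b n * exp (g * real n))"
      by (rule ext) (simp add: v_def algebra_simps)
    ultimately show False using heavy[OF g(1)] by simp
  qed
  define Y' where "Y' = (LEAST y. d / 4 < V g y)"
  have Y'1: "d / 4 < V g Y'" unfolding Y'_def by (rule LeastI_ex[OF ex])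
  have Y'N: "N < Y'"
  proof (rule ccontr)
    assume "\<not> N < Y'"
    then have "V g Y' \<le> V g N" by (intro Vmono) auto
    then show False using Y'1 g(2) eta_le by linarith
  qed
  define Y where "Y = Y' - 1"
  have YY: "Y' = Suc Y" unfolding Y_def using Y'N by auto
  have VY: "V g Y \<le> d / 4"
    using not_less_Least[of Y "\<lambda>y. d / 4 < V g y"] YY unfolding Y'_def[symmetric] by auto
  have NY: "N \<le> Y" using Y'N YY by auto
  define X where "X = 2 * Y + 1"
  have VX: "d / 4 < V g X" using Y'1 Vmono[of Y' X] YY unfolding X_def by auto
  define w where "w n = exp (g * real n) - 1" for n :: nat
  have wnn: "0 \<le> w n" for n unfolding w_def using g(1) by auto
  define P where "P = {(i,j). i + j \<le> X}"
  have finP: "finite P"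
  proof (rule finite_subset)
    show "P \<subseteq> {..X} \<times> {..X}" unfolding P_def by auto
  qed auto
  have "(\<Sum>n\<le>X. w n * cv b n) = (\<Sum>n\<le>X. \<Sum>k\<le>n. w (k + (n - k)) * b k * b (n - k))"
    unfolding cv_def sum_distrib_left
    by (intro sum.cong refl) (auto simp: mult.assoc)
  also have "\<dots> = (\<Sum>(i,j)\<in>P. w (i + j) * b i * b j)"
    unfolding P_def by (rule sum.triangle_reindex_eq[symmetric])
  also have "\<dots> = (\<Sum>(i,j)\<in>P. v i * v j + v i * b j + b i * v j)"
    by (intro sum.cong refl) (auto simp: w_def v_def algebra_simps exp_add distrib_left)
  also have "\<dots> = (\<Sum>(i,j)\<in>P. v i * v j) + (\<Sum>(i,j)\<in>P. v i * b j) + (\<Sum>(i,j)\<in>P. b i * v j)"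
    by (simp add: sum.distrib case_prod_unfold)
  finally have up0: "(\<Sum>n\<le>X. w n * cv b n) = (\<Sum>(i,j)\<in>P. v i * v j) + (\<Sum>(i,j)\<in>P. v i * b j) + (\<Sum>(i,j)\<in>P. b i * v j)" .
  have Bm: "(\<Sum>j\<le>X. b j) \<le> m" unfolding m_def by (rule sum_le_suminf[OF sb]) (use nn in auto)
  have s1: "(\<Sum>(i,j)\<in>P. v i * v j) \<le> 2 * V g Y * V g X"
  proof -
    have "(\<Sum>(i,j)\<in>P. v i * v j) \<le> (\<Sum>(i,j)\<in>({..Y} \<times> {..X}) \<union> ({..X} \<times> {..Y}). v i * v j)"
      by (rule sum_mono2) (auto simp: P_def X_def intro!: mult_nonneg_nonneg vnn)
    also have "\<dots> \<le> (\<Sum>(i,j)\<in>{..Y} \<times> {..X}. v i * v j) + (\<Sum>(i,j)\<in>{..X} \<times> {..Y}. v i * v j)"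
      by (rule sum_union_le_nonneg) (auto intro!: mult_nonneg_nonneg vnn)
    also have "\<dots> = 2 * V g Y * V g X" unfolding sum_prod_rect Vv by simp
    finally show ?thesis .
  qed
  have s2: "(\<Sum>(i,j)\<in>P. v i * b j) \<le> m * V g X"
  proof -
    have "(\<Sum>(i,j)\<in>P. v i * b j) \<le> (\<Sum>(i,j)\<in>{..X} \<times> {..X}. v i * b j)"
      by (rule sum_mono2) (auto simp: P_def intro!: mult_nonneg_nonneg vnn nn)
    also have "\<dots> = V g X * (\<Sum>j\<le>X. b j)" unfolding sum_prod_rect Vv by simp
    also have "\<dots> \<le> V g X * m" by (rule mult_left_mono[OF Bm Vnn])
    finally show ?thesis by (simp add: mult.commute)
  qed
  have s3: "(\<Sum>(i,j)\<in>P. b i * v j) \<le> m * V g X"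
  proof -
    have "(\<Sum>(i,j)\<in>P. b i * v j) \<le> (\<Sum>(i,j)\<in>{..X} \<times> {..X}. b i * v j)"
      by (rule sum_mono2) (auto simp: P_def intro!: mult_nonneg_nonneg vnn nn)
    also have "\<dots> = (\<Sum>j\<le>X. b j) * V g X" unfolding sum_prod_rect Vv by simp
    also have "\<dots> \<le> m * V g X" by (rule mult_right_mono[OF Bm Vnn])
    finally show ?thesis .
  qed
  have up: "(\<Sum>n\<le>X. w n * cv b n) \<le> 2 * V g Y * V g X + 2 * m * V g X"
    using up0 s1 s2 s3 by linarith
  have pw: "(2 * m + d) * v n - (if n \<le> N then (2 * m + d) * v n else 0) \<le> w n * cv b n" for n
  proof (cases "n \<le> N")
    case True
    have "0 \<le> cv b n" unfolding cv_def by (intro sum_nonneg mult_nonneg_nonneg nn)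
    then show ?thesis using True wnn[of n] by simp
  next
    case False
    then have "(2 * m + d) * b n \<le> cv b n" using big[of n] unfolding m_def by auto
    then have "w n * ((2 * m + d) * b n) \<le> w n * cv b n" by (rule mult_left_mono[OF _ wnn])
    then show ?thesis using False by (simp add: v_def w_def algebra_simps)
  qed
  have "(\<Sum>n\<le>X. (2 * m + d) * v n - (if n \<le> N then (2 * m + d) * v n else 0)) \<le> (\<Sum>n\<le>X. w n * cv b n)"
    by (rule sum_mono) (rule pw)
  moreover have "(\<Sum>n\<le>X. (2 * m + d) * v n - (if n \<le> N then (2 * m + d) * v n else 0))
      = (2 * m + d) * V g X - (2 * m + d) * V g N"
  proof -
    have NX: "{..X} \<inter> {n. n \<le> N} = {..N}" using NY unfolding X_def by auto
    have "(\<Sum>n\<le>X. (if n \<le> N then (2 * m + d) * v n else 0)) = (\<Sum>n\<le>N. (2 * m + d) * v n)"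
      by (simp add: sum.If_cases NX)
    then show ?thesis by (simp add: sum_subtractf sum_distrib_left Vv)
  qed
  ultimately have low: "(2 * m + d) * V g X - (2 * m + d) * V g N \<le> 2 * V g Y * V g X + 2 * m * V g X"
    using up by linarith
  have "2 * V g Y * V g X \<le> 2 * (d / 4) * V g X"
    using VY Vnn[of X] by (intro mult_right_mono) auto
  moreover have "(2 * m + d) * V g N \<le> (2 * m + d) * \<eta>"
    using g(2) pm by (intro mult_left_mono) auto
  ultimately have "d / 2 * V g X \<le> d^2 / 8" using low eta_eq by (simp add: algebra_simps)
  then have "V g X \<le> d / 4" using d by (simp add: field_simps power2_eq_square)
  then show False using VX by linarith
qed



lemma pmf_summable_nat: "summable (pmf (F :: nat pmf))"
proof (rule summableI_nonneg_bounded)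
  fix n
  have "(\<Sum>i<n. pmf F i) = measure_pmf.prob F {..<n}"
    by (simp add: measure_measure_pmf_finite)
  also have "\<dots> \<le> 1" by (rule measure_pmf.prob_le_1)
  finally show "(\<Sum>i<n. pmf F i) \<le> 1" .
qed simp

lemma phi_finite_0: "phi_finite F 0"
  unfolding phi_finite_def using pmf_summable_nat[of F] by simp

lemma gamma_hat_ge0: "ereal 0 \<le> gamma_hat F"
proof -
  have "ereal 0 \<in> {ereal \<gamma> |\<gamma>. phi_finite F \<gamma>}" using phi_finite_0[of F] by auto
  then show ?thesis unfolding gamma_hat_def by (rule Sup_upper)
qed

lemma exists_pos_index:
  fixes F :: "nat pmf"
  assumes "infinite (set_pmf F)"
  shows "\<exists>k. 1 \<le> k \<and> 0 < pmf F k"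
proof -
  have "set_pmf F - {0} \<noteq> {}" 
  proof
    assume "set_pmf F - {0} = {}"
    then have "set_pmf F \<subseteq> {0}" by auto
    then have "finite (set_pmf F)" by (rule finite_subset) simp
    then show False using assms by simp
  qed
  then obtain k where "k \<in> set_pmf F" "k \<noteq> 0" by auto
  moreover have "pmf F k \<noteq> 0" using \<open>k \<in> set_pmf F\<close> by (simp add: set_pmf_iff)
  moreover have "0 \<le> pmf F k" by (rule pmf_nonneg)
  ultimately have "1 \<le> k \<and> 0 < pmf F k" by linarith
  then show ?thesis by blast
qed

lemma bstep:
  fixes F :: "nat pmf" and \<gamma> y :: real and x :: nat
  assumes "1 \<le> x" "0 < y" "y < pmf F (x - 1) / pmf F x"
  shows "0 < pmf F x \<and> y * exp (- \<gamma>) * (exp (\<gamma> * real x) * pmf F x) \<le> exp (\<gamma> * real (x - 1)) * pmf F (x - 1)"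
proof -
  have ax: "pmf F x \<noteq> 0" using assms by auto
  then have ax': "0 < pmf F x" using pmf_nonneg[of F x] by linarith
  have "y * pmf F x < pmf F (x - 1)" using assms(3) ax' by (simp add: pos_less_divide_eq)
  then have "exp (\<gamma> * real (x - 1)) * (y * pmf F x) \<le> exp (\<gamma> * real (x - 1)) * pmf F (x - 1)"
    by (intro mult_left_mono) auto
  moreover have "exp (\<gamma> * real (x - 1)) = exp (- \<gamma>) * exp (\<gamma> * real x)"
    using assms(1) by (simp add: of_nat_diff algebra_simps flip: exp_add)
  ultimately show ?thesis using ax' by (simp add: algebra_simps)
qed

lemma ev_step:
  fixes F :: "nat pmf" and \<gamma> y :: real
  assumes "eventually (\<lambda>x. y < pmf F (x - 1) / pmf F x) sequentially" "0 < y"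
  shows "eventually (\<lambda>x. 0 < exp (\<gamma> * real x) * pmf F x \<and>
     y * exp (- \<gamma>) * (exp (\<gamma> * real x) * pmf F x) \<le> exp (\<gamma> * real (x - 1)) * pmf F (x - 1)) sequentially"
proof -
  have "eventually (\<lambda>x. 1 \<le> x \<and> y < pmf F (x - 1) / pmf F x) sequentially"
    using assms(1) eventually_ge_at_top[of 1] by eventually_elim auto
  then show ?thesis
  proof (rule eventually_mono)
    fix x assume "1 \<le> x \<and> y < pmf F (x - 1) / pmf F x"
    then show "0 < exp (\<gamma> * real x) * pmf F x \<and>
     y * exp (- \<gamma>) * (exp (\<gamma> * real x) * pmf F x) \<le> exp (\<gamma> * real (x - 1)) * pmf F (x - 1)"
      using bstep[of x y F \<gamma>] assms(2) by auto
  qed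
qed

lemma cv_tilt: "cv (\<lambda>n. exp (\<gamma> * real n) * pmf F n) n = exp (\<gamma> * real n) * conv2 F n"
  unfolding cv_def conv2_def sum_distrib_left
proof (intro sum.cong refl)
  fix k assume "k \<in> {..n}"
  then have "exp (\<gamma> * real k) * exp (\<gamma> * real (n - k)) = exp (\<gamma> * real n)"
    by (simp add: of_nat_diff algebra_simps flip: exp_add)
  then show "exp (\<gamma> * real k) * pmf F k * (exp (\<gamma> * real (n - k)) * pmf F (n - k)) =
         exp (\<gamma> * real n) * (pmf F k * pmf F (n - k))"
  proof -
    have "exp (\<gamma> * real k) * pmf F k * (exp (\<gamma> * real (n - k)) * pmf F (n - k)) =
         (exp (\<gamma> * real k) * exp (\<gamma> * real (n - k))) * (pmf F k * pmf F (n - k))"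
      by (simp only: ac_simps)
    then show ?thesis using \<open>exp (\<gamma> * real k) * exp (\<gamma> * real (n - k)) = exp (\<gamma> * real n)\<close> by simp
  qed
qed

lemma q_lemma:
  fixes F :: "nat pmf" and c \<gamma> :: real
  assumes c: "0 < c" and eq: "conv2 F \<sim>[sequentially] (\<lambda>n. c * pmf F n)"
    and pos: "eventually (\<lambda>n. 0 < pmf F n) sequentially"
  shows "(\<lambda>n. cv (\<lambda>n. exp (\<gamma> * real n) * pmf F n) n / (exp (\<gamma> * real n) * pmf F n)) \<longlonglongrightarrow> c"
proof -
  have "eventually (\<lambda>n. conv2 F n \<noteq> 0 \<or> c * pmf F n \<noteq> 0) sequentially"
    using pos by eventually_elim (use c in auto)
  from asymp_equivD_strong[OF eq this]
  have "(\<lambda>n. conv2 F n / (c * pmf F n)) \<longlonglongrightarrow> 1" .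
  then have "(\<lambda>n. c * (conv2 F n / (c * pmf F n))) \<longlonglongrightarrow> c * 1" by (intro tendsto_intros)
  then have l: "(\<lambda>n. c * (conv2 F n / (c * pmf F n))) \<longlonglongrightarrow> c" by simp
  show ?thesis
  proof (rule Lim_transform_eventually[OF l])
    show "eventually (\<lambda>n. c * (conv2 F n / (c * pmf F n)) = cv (\<lambda>n. exp (\<gamma> * real n) * pmf F n) n / (exp (\<gamma> * real n) * pmf F n)) sequentially"
      using pos by eventually_elim (use c in \<open>simp add: cv_tilt\<close>)
  qed
qed



lemma main_inf:
  fixes F :: "nat pmf"
  assumes unb: "infinite (set_pmf F)"
    and li: "liminf (\<lambda>x. ereal (pmf F (x - 1) / pmf F x)) = \<infinity>"
    and c: "0 < c" and eq: "conv2 F \<sim>[sequentially] (\<lambda>n. c * pmf F n)"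
  shows False
proof -
  define b where "b n = exp (0 * real n) * pmf F n" for n :: nat
  have nn: "0 \<le> b n" for n unfolding b_def by simp
  have evy: "eventually (\<lambda>x. y < pmf F (x - 1) / pmf F x) sequentially" for y :: real
  proof -
    have "\<forall>y'<\<infinity>. eventually (\<lambda>x. y' < ereal (pmf F (x - 1) / pmf F x)) sequentially"
      using le_Liminf_iff[of "\<infinity>" sequentially "\<lambda>x. ereal (pmf F (x - 1) / pmf F x)"] li by simp
    then have "eventually (\<lambda>x. ereal y < ereal (pmf F (x - 1) / pmf F x)) sequentially"
      by (rule allE[where x="ereal y"]) simp
    then show ?thesis by simp
  qed
  have st0: "eventually (\<lambda>x. 0 < b x \<and> y * (b x) \<le> b (x - 1)) sequentially" if "0 < y" for y :: real
    using ev_step[OF evy that, of 0] unfolding b_def by simp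
  have pos: "eventually (\<lambda>n. 0 < b n) sequentially"
    using st0[OF zero_less_one] by (rule eventually_mono) simp
  have posa: "eventually (\<lambda>n. 0 < pmf F n) sequentially"
    using pos by (rule eventually_mono) (simp add: b_def)
  have q: "(\<lambda>n. cv b n / b n) \<longlonglongrightarrow> c"
    using q_lemma[OF c eq posa, of 0] unfolding b_def .
  obtain k where k: "1 \<le> k" "0 < pmf F k" using exists_pos_index[OF unb] by blast
  define L where "L = c / pmf F k + 1"
  have L0: "0 \<le> L" unfolding L_def using c k by simp
  have "2 * (b 0 + L * (\<Sum>j\<in>{1..k}. b j)) \<le> c"
  proof (rule lim_bound[OF nn q pos])
    fix e :: real assume e: "0 < e" "e < 1"
    have "0 < 1 - e" using e by simp
      from st0[OF this] show "eventually (\<lambda>j. (1 - e) * b j \<le> b (j - 1)) sequentially"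
        by (rule eventually_mono) simp
    show "frequently (\<lambda>n. L * (1 - e) * b n \<le> b (n - 1)) sequentially"
    proof (rule eventually_frequently)
      have "1 \<le> L" unfolding L_def using c k by simp
      then have "0 < L * (1 - e)" using e by simp
      from st0[OF this] show "eventually (\<lambda>n. L * (1 - e) * b n \<le> b (n - 1)) sequentially"
        by (rule eventually_mono) simp
    qed simp
  qed (rule L0)
  moreover have "b k \<le> (\<Sum>j\<in>{1..k}. b j)"
    by (rule member_le_sum) (use k nn in auto)
  moreover have "L * b k = L * pmf F k" unfolding b_def by simp
  moreover have "0 \<le> b 0" by (rule nn)
  moreover have "c < 2 * (L * pmf F k)"
  proof -
    have "L * pmf F k = c + pmf F k" unfolding L_def using k by (simp add: field_simps)
    then show ?thesis using c k by linarith
  qed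
  moreover have "L * b k \<le> L * (\<Sum>j\<in>{1..k}. b j)"
    using L0 \<open>b k \<le> (\<Sum>j\<in>{1..k}. b j)\<close> by (rule mult_left_mono[rotated])
  ultimately have "2 * (L * pmf F k) \<le> c" by (smt (verit))
  then show False using \<open>c < 2 * (L * pmf F k)\<close> by linarith
qed

lemma main_finite:
  fixes F :: "nat pmf" and \<gamma> c :: real
  assumes unb: "infinite (set_pmf F)" and gh: "gamma_hat F = ereal \<gamma>"
    and li: "ereal (exp \<gamma>) \<le> liminf (\<lambda>x. ereal (pmf F (x - 1) / pmf F x))"
    and c: "0 < c" and eq: "conv2 F \<sim>[sequentially] (\<lambda>n. c * pmf F n)"
  shows "S_lattice F \<gamma>"
proof -
  define b where "b n = exp (\<gamma> * real n) * pmf F n" for n :: nat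
  have nn: "0 \<le> b n" for n unfolding b_def by simp
  have g0: "0 \<le> \<gamma>" using gamma_hat_ge0[of F] gh by simp
  have evy: "eventually (\<lambda>x. y < pmf F (x - 1) / pmf F x) sequentially" if "y < exp \<gamma>" for y :: real
  proof -
    have "\<forall>y'<ereal (exp \<gamma>). eventually (\<lambda>x. y' < ereal (pmf F (x - 1) / pmf F x)) sequentially"
      using le_Liminf_iff[of "ereal (exp \<gamma>)" sequentially "\<lambda>x. ereal (pmf F (x - 1) / pmf F x)"] li by simp
    then have "eventually (\<lambda>x. ereal y < ereal (pmf F (x - 1) / pmf F x)) sequentially"
      by (rule allE[where x="ereal y"]) (use that in simp)
    then show ?thesis by simp
  qed
  have st0: "eventually (\<lambda>x. 0 < b x \<and> y * exp (- \<gamma>) * b x \<le> b (x - 1)) sequentially"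
    if "0 < y" "y < exp \<gamma>" for y :: real
    using ev_step[OF evy[OF that(2)] that(1), of \<gamma>] unfolding b_def by simp
  have st1: "eventually (\<lambda>j. 0 < b j \<and> (1 - e) * b j \<le> b (j - 1)) sequentially" if "0 < e" "e < 1" for e :: real
  proof -
    have "0 < (1 - e) * exp \<gamma>" "(1 - e) * exp \<gamma> < exp \<gamma>" using that by auto
    note st0[OF this]
    moreover have "(1 - e) * exp \<gamma> * exp (- \<gamma>) = 1 - e" by (simp add: exp_minus)
    ultimately show ?thesis by simp
  qed
  have st: "eventually (\<lambda>j. (1 - e) * b j \<le> b (j - 1)) sequentially" if "0 < e" "e < 1" for e :: real
    using st1[OF that] by (rule eventually_mono) simp
  have pos: "eventually (\<lambda>n. 0 < b n) sequentially"
  proof -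
    have "0 < (1/2::real)" "(1/2::real) < 1" by auto
    from st1[OF this] show ?thesis by (rule eventually_mono) simp
  qed
  have posa: "eventually (\<lambda>n. 0 < pmf F n) sequentially"
    using pos by (rule eventually_mono) (simp add: b_def zero_less_mult_iff)
  have q: "(\<lambda>n. cv b n / b n) \<longlonglongrightarrow> c"
    using q_lemma[OF c eq posa, of \<gamma>] unfolding b_def .
  have splitK: "(\<Sum>k\<le>K. b k) = b 0 + (\<Sum>k\<in>{1..K}. b k)" for K
    by (simp add: atMost_atLeast0 sum.atLeast_Suc_atMost)
  have part: "(\<Sum>k\<le>K. b k) \<le> c / 2" for K
  proof -
    have "2 * (b 0 + 1 * (\<Sum>k\<in>{1..K}. b k)) \<le> c"
    proof (rule lim_bound[OF nn q pos])
      fix e :: real assume e: "0 < e" "e < 1"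
      show "eventually (\<lambda>j. (1 - e) * b j \<le> b (j - 1)) sequentially" by (rule st[OF e])
      show "frequently (\<lambda>n. 1 * (1 - e) * b n \<le> b (n - 1)) sequentially"
        by (rule eventually_frequently) (use st[OF e] in simp_all)
    qed simp
    then show ?thesis using splitK[of K] by simp
  qed
  have sb: "summable b"
  proof (rule summableI_nonneg_bounded[OF nn])
    fix n show "(\<Sum>i<n. b i) \<le> c / 2"
    proof (cases n)
      case 0 then show ?thesis using c by simp
    next
      case (Suc n') then show ?thesis using part[of n'] by (simp add: lessThan_Suc_atMost)
    qed
  qed
  define m where "m = suminf b"
  have m0: "0 \<le> m" unfolding m_def by (rule suminf_nonneg[OF sb nn])
  have mc: "2 * m \<le> c"
  proof -
    have "m \<le> c / 2" unfolding m_def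
    proof (rule suminf_le_const[OF sb])
      fix n show "(\<Sum>i<n. b i) \<le> c / 2"
      proof (cases n)
        case 0 then show ?thesis using c by simp
      next
        case (Suc n') then show ?thesis using part[of n'] by (simp add: lessThan_Suc_atMost)
      qed
    qed
    then show ?thesis by simp
  qed
  have heavy: "\<not> summable (\<lambda>n. b n * exp (g * real n))" if g: "0 < g" for g :: real
  proof
    assume "summable (\<lambda>n. b n * exp (g * real n))"
    moreover have "(\<lambda>n. b n * exp (g * real n)) = (\<lambda>n. exp ((\<gamma> + g) * real n) * pmf F n)"
      by (rule ext) (simp add: b_def algebra_simps exp_add)
    ultimately have "phi_finite F (\<gamma> + g)" unfolding phi_finite_def by simp
    then have "ereal (\<gamma> + g) \<in> {ereal \<gamma> |\<gamma>. phi_finite F \<gamma>}" by auto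
    then have "ereal (\<gamma> + g) \<le> gamma_hat F" unfolding gamma_hat_def by (rule Sup_upper)
    then show False using gh g by simp
  qed
  have cm: "c \<le> 2 * m"
  proof (rule ccontr)
    assume "\<not> c \<le> 2 * m"
    define d where "d = (c - 2 * m) / 2"
    have d2: "2 * d = c - 2 * m" unfolding d_def by simp
    have d: "0 < d" using d2 \<open>\<not> c \<le> 2 * m\<close> by linarith
    have lt: "2 * m + d < c" using d2 d by linarith
    have "eventually (\<lambda>n. 2 * m + d < cv b n / b n \<and> 0 < b n) sequentially"
      using order_tendstoD(1)[OF q lt] pos by eventually_elim auto
    then obtain N where N: "\<And>n. N \<le> n \<Longrightarrow> 2 * m + d < cv b n / b n \<and> 0 < b n"
      unfolding eventually_sequentially by blast
    show False
    proof (rule FK[OF nn sb heavy d])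
      fix n assume "N \<le> n"
      then have "2 * m + d < cv b n / b n" "0 < b n" using N by auto
      then show "(2 * suminf b + d) * b n \<le> cv b n"
        unfolding m_def[symmetric] by (simp add: pos_less_divide_eq less_imp_le)
    qed auto
  qed
  have c2m: "c = 2 * m" using mc cm by simp
  obtain k0 where k0: "1 \<le> k0" "0 < pmf F k0" using exists_pos_index[OF unb] by blast
  have bk0: "0 < b k0" unfolding b_def using k0 by simp
  have mb: "b 0 + b k0 \<le> m"
  proof -
    have "sum b {0, k0} \<le> m" unfolding m_def by (rule sum_le_suminf[OF sb]) (use nn in auto)
    then show ?thesis using k0 by simp
  qed
  have up: "eventually (\<lambda>n. b (n - 1) < (1 + \<theta>) * b n) sequentially" if th: "0 < \<theta>" for \<theta> :: real
  proof (rule ccontr)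
    assume "\<not> ?thesis"
    then have fr0: "frequently (\<lambda>n. (1 + \<theta>) * b n \<le> b (n - 1)) sequentially"
      by (simp add: not_eventually not_less)
    have bnd: "2 * (b 0 + (1 + \<theta>) * ((\<Sum>k\<le>K. b k) - b 0)) \<le> c" for K
    proof -
      have "2 * (b 0 + (1 + \<theta>) * (\<Sum>k\<in>{1..K}. b k)) \<le> c"
      proof (rule lim_bound[OF nn q pos])
        fix e :: real assume e: "0 < e" "e < 1"
        show "eventually (\<lambda>j. (1 - e) * b j \<le> b (j - 1)) sequentially" by (rule st[OF e])
        show "frequently (\<lambda>n. (1 + \<theta>) * (1 - e) * b n \<le> b (n - 1)) sequentially"
          using fr0
        proof (rule frequently_elim1)
          fix n assume h: "(1 + \<theta>) * b n \<le> b (n - 1)"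
          have "(1 - e) * b n \<le> b n" using e nn[of n] by (intro mult_left_le_one_le) auto
          then have "(1 + \<theta>) * ((1 - e) * b n) \<le> (1 + \<theta>) * b n"
            by (rule mult_left_mono) (use th in simp)
          then have "(1 + \<theta>) * (1 - e) * b n \<le> (1 + \<theta>) * b n" by (simp add: mult.assoc)
          then show "(1 + \<theta>) * (1 - e) * b n \<le> b (n - 1)" using h by linarith
        qed
      qed (use th in simp)
      then show ?thesis using splitK[of K] by simp
    qed
    have lim: "(\<lambda>K. 2 * (b 0 + (1 + \<theta>) * ((\<Sum>k\<le>K. b k) - b 0))) \<longlonglongrightarrow> 2 * (b 0 + (1 + \<theta>) * (m - b 0))"
      unfolding m_def by (intro tendsto_intros summable_LIMSEQ'[OF sb])
    have "2 * (b 0 + (1 + \<theta>) * (m - b 0)) \<le> c"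
      by (rule tendsto_le[OF trivial_limit_sequentially tendsto_const lim]) (use bnd in simp)
    then have "\<theta> * (m - b 0) \<le> 0" using c2m by (simp add: algebra_simps)
    moreover have "0 < \<theta> * (m - b 0)" using th mb bk0 by simp
    ultimately show False by simp
  qed
  have r1: "(\<lambda>n. b (n - 1) / b n) \<longlonglongrightarrow> 1"
  proof (rule order_tendstoI)
    fix y :: real assume y: "y < 1"
    define e where "e = (1 - max y 0) / 2"
    have e: "0 < e" "e < 1" "y < 1 - e" using y unfolding e_def by (auto simp: max_def field_simps)
    show "eventually (\<lambda>n. y < b (n - 1) / b n) sequentially"
      using st1[OF e(1,2)]
    proof (rule eventually_mono)
      fix n assume "0 < b n \<and> (1 - e) * b n \<le> b (n - 1)"
      then have "1 - e \<le> b (n - 1) / b n" by (simp add: pos_le_divide_eq)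
      then show "y < b (n - 1) / b n" using e by linarith
    qed
  next
    fix y :: real assume y: "1 < y"
    have "eventually (\<lambda>n. b (n - 1) < (1 + (y - 1)) * b n \<and> 0 < b n) sequentially"
    proof -
      have "0 < y - 1" using y by simp
      from up[OF this] pos show ?thesis by eventually_elim auto
    qed
    then show "eventually (\<lambda>n. b (n - 1) / b n < y) sequentially"
      by (rule eventually_mono) (simp add: pos_divide_less_eq)
  qed
  have "(\<lambda>n. inverse (b (n - 1) / b n)) \<longlonglongrightarrow> inverse 1"
    by (rule tendsto_inverse[OF r1]) simp
  then have r2: "(\<lambda>n. b n / b (n - 1)) \<longlonglongrightarrow> 1" by simp
  have "(\<lambda>n. b (Suc n) / b n) \<longlonglongrightarrow> 1"
    using LIMSEQ_Suc[OF r2] by simp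
  then have "(\<lambda>n. exp (- \<gamma>) * (b (Suc n) / b n)) \<longlonglongrightarrow> exp (- \<gamma>) * 1"
    by (intro tendsto_intros) simp
  moreover have "exp (- \<gamma>) * (b (Suc n) / b n) = pmf F (Suc n) / pmf F n" for n
    unfolding b_def by (simp add: exp_add exp_minus field_simps distrib_left)
  ultimately have ratio: "(\<lambda>n. pmf F (Suc n) / pmf F n) \<longlonglongrightarrow> exp (- \<gamma>)" by simp
  have phim: "phi F \<gamma> = m" unfolding phi_def m_def b_def by simp
  have pf: "phi_finite F \<gamma>" unfolding phi_finite_def using sb unfolding b_def .
  have eq2: "conv2 F \<sim>[sequentially] (\<lambda>n. 2 * phi F \<gamma> * pmf F n)"
    using eq unfolding phim c2m .
  show ?thesis unfolding S_lattice_def using g0 unb pf ratio eq2 by simp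
qed

lemma forward:
  fixes F :: "nat pmf" and \<gamma> :: real
  assumes S: "S_lattice F \<gamma>"
  shows "liminf (\<lambda>x. ereal (pmf F (x - 1) / pmf F x)) = ereal (exp \<gamma>)"
    and "\<exists>c::real. c > 0 \<and> conv2 F \<sim>[sequentially] (\<lambda>n. c * pmf F n)"
proof -
  from S have unb: "infinite (set_pmf F)" and pf: "phi_finite F \<gamma>"
    and rat: "(\<lambda>n. pmf F (Suc n) / pmf F n) \<longlonglongrightarrow> exp (- \<gamma>)"
    and eq: "conv2 F \<sim>[sequentially] (\<lambda>n. 2 * phi F \<gamma> * pmf F n)"
    unfolding S_lattice_def by auto
  have "(\<lambda>n. inverse (pmf F (Suc n) / pmf F n)) \<longlonglongrightarrow> inverse (exp (- \<gamma>))"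
    by (rule tendsto_inverse[OF rat]) simp
  then have r: "(\<lambda>n. pmf F n / pmf F (Suc n)) \<longlonglongrightarrow> exp \<gamma>" by (simp add: exp_minus)
  have "(\<lambda>x. pmf F (x - 1) / pmf F x) \<longlonglongrightarrow> exp \<gamma>"
    by (subst filterlim_sequentially_Suc[symmetric]) (simp add: r)
  then have "(\<lambda>x. ereal (pmf F (x - 1) / pmf F x)) \<longlonglongrightarrow> ereal (exp \<gamma>)"
    by (rule tendsto_ereal)
  then show "liminf (\<lambda>x. ereal (pmf F (x - 1) / pmf F x)) = ereal (exp \<gamma>)"
    by (intro lim_imp_Liminf) simp_all
  obtain k0 where k0: "1 \<le> k0" "0 < pmf F k0" using exists_pos_index[OF unb] by blast
  have "0 < phi F \<gamma>" unfolding phi_def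
    by (rule suminf_pos2[of _ k0]) (use pf k0 in \<open>auto simp: phi_finite_def\<close>)
  then show "\<exists>c::real. c > 0 \<and> conv2 F \<sim>[sequentially] (\<lambda>n. c * pmf F n)"
    using eq by (intro exI[of _ "2 * phi F \<gamma>"]) simp
qed

theorem theorem8:
  fixes F :: "nat pmf"
  assumes unbounded: "infinite (set_pmf F)"
  shows "(gamma_hat F \<noteq> \<infinity> \<and> S_lattice F (real_of_ereal (gamma_hat F))) \<longleftrightarrow>
    ((if gamma_hat F = \<infinity>
      then liminf (\<lambda>x. ereal (pmf F (x - 1) / pmf F x)) = \<infinity>
      else liminf (\<lambda>x. ereal (pmf F (x - 1) / pmf F x)) \<ge> ereal (exp (real_of_ereal (gamma_hat F))))
     \<and> (\<exists>c::real. c > 0 \<and> conv2 F \<sim>[sequentially] (\<lambda>n. c * pmf F n)))"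
proof (cases "gamma_hat F = \<infinity>")
  case True
  have "\<not> (liminf (\<lambda>x. ereal (pmf F (x - 1) / pmf F x)) = \<infinity> \<and>
          (\<exists>c::real. c > 0 \<and> conv2 F \<sim>[sequentially] (\<lambda>n. c * pmf F n)))"
    using main_inf[OF unbounded] by blast
  then show ?thesis using True by simp
next
  case False
  have g0: "ereal 0 \<le> gamma_hat F" by (rule gamma_hat_ge0)
  then obtain \<gamma> where gh: "gamma_hat F = ereal \<gamma>" using False by (cases "gamma_hat F") auto
  show ?thesis
  proof
    assume "gamma_hat F \<noteq> \<infinity> \<and> S_lattice F (real_of_ereal (gamma_hat F))"
    then have S: "S_lattice F \<gamma>" using gh by simp
    show "(if gamma_hat F = \<infinity>
      then liminf (\<lambda>x. ereal (pmf F (x - 1) / pmf F x)) = \<infinity>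
      else liminf (\<lambda>x. ereal (pmf F (x - 1) / pmf F x)) \<ge> ereal (exp (real_of_ereal (gamma_hat F))))
     \<and> (\<exists>c::real. c > 0 \<and> conv2 F \<sim>[sequentially] (\<lambda>n. c * pmf F n))"
      using forward[OF S] gh by simp
  next
    assume h: "(if gamma_hat F = \<infinity>
      then liminf (\<lambda>x. ereal (pmf F (x - 1) / pmf F x)) = \<infinity>
      else liminf (\<lambda>x. ereal (pmf F (x - 1) / pmf F x)) \<ge> ereal (exp (real_of_ereal (gamma_hat F))))
     \<and> (\<exists>c::real. c > 0 \<and> conv2 F \<sim>[sequentially] (\<lambda>n. c * pmf F n))"
    then have li: "ereal (exp \<gamma>) \<le> liminf (\<lambda>x. ereal (pmf F (x - 1) / pmf F x))"
      using gh by simp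
    from h obtain c :: real where c: "0 < c" "conv2 F \<sim>[sequentially] (\<lambda>n. c * pmf F n)" by blast
    have "S_lattice F \<gamma>" by (rule main_finite[OF unbounded gh li c])
    then show "gamma_hat F \<noteq> \<infinity> \<and> S_lattice F (real_of_ereal (gamma_hat F))" using gh by simp
  qed
qed

end
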